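(* Let $n$ be odd, let $\alpha$ satisfy $0<\alpha\le\frac{\sqrt n}{4e^2\sqrt{2\pi}}$, let $k\ge1$, and let $\ell_1,\ldots,\ell_k$ be distinct integers in $\{1,\ldots,\lfloor n/2\rfloor\}$. For $\xi\in[-\pi,\pi]$ define $$f(\xi)=\sum_{r\in\mathbb Z}e^{i\xi r}\prod_{j=1}^k\frac{\alpha\,bin(n,\tfrac12,r+\lfloor n/4\rfloor+\ell_j)}{1-\alpha\,bin(n,\tfrac12,r+\lfloor n/4\rfloor+\ell_j)}.$$ If $|\xi|\ge2$, then $|f(\xi)|\le 2e^{-\sqrt n}$.
   Context: $bin(n,p,k)=\binom nk p^k(1-p)^{n-k}$ for integers $0\le k\le n$, and $bin(n,p,k)=0$ if $k\notin\{0,\ldots,n\}$. *)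

theory Defs
  imports "HOL-Analysis.Analysis"
begin

definition bin :: "nat \<Rightarrow> real \<Rightarrow> int \<Rightarrow> real" where
  "bin n p k = (if 0 \<le> k \<and> k \<le> int n
      then real (n choose nat k) * p ^ nat k * (1 - p) ^ (n - nat k) else 0)"

end

theory Submission
  imports Defs
begin

definition ee :: "real \<Rightarrow> complex" where "ee \<theta> = exp (\<i> * complex_of_real \<theta>)"

lemma ee_add: "ee (x + y) = ee x * ee y"
  unfolding ee_def by (simp add: distrib_left exp_add)

lemma norm_ee[simp]: "norm (ee x) = 1"
  unfolding ee_def by simp

lemma ee_nat_mult: "ee (real j * x) = ee x ^ j"
  unfolding ee_def by (metis exp_of_nat_mult mult.left_commute of_real_mult of_real_of_nat_eq)

lemma ee_zero[simp]: "ee 0 = 1" unfolding ee_def by simp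

lemma ortho:
  fixes N :: nat and s :: int
  assumes "N > 0"
  shows "(\<Sum>j<N. ee (2 * pi * real j * of_int s / real N)) = (if int N dvd s then of_nat N else 0)"
proof -
  define z where "z = ee (2 * pi * of_int s / real N)"
  have zj: "ee (2 * pi * real j * of_int s / real N) = z ^ j" for j
    unfolding z_def by (subst ee_nat_mult[symmetric]) (simp add: algebra_simps)
  have zN: "z ^ N = 1"
  proof -
    have "z ^ N = ee (2 * pi * real N * of_int s / real N)" by (rule zj[symmetric])
    also have "\<dots> = exp ((2 * complex_of_int s * pi) * \<i>)" using assms unfolding ee_def by (simp add: algebra_simps)
    also have "\<dots> = 1" by (subst exp_eq_1) (auto intro!: exI[where x=s])
    finally show ?thesis .
  qed
  show ?thesis
  proof (cases "int N dvd s")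
    case True
    then obtain q where q: "s = int N * q" by (auto elim: dvdE)
    have "z = exp ((2 * complex_of_int q * pi) * \<i>)" using assms unfolding z_def ee_def q by (simp add: algebra_simps)
    also have "\<dots> = 1" by (subst exp_eq_1) (auto intro!: exI[where x=q])
    finally have "z = 1" .
    then show ?thesis using True by (simp add: zj)
  next
    case False
    have "z \<noteq> 1"
    proof
      assume "z = 1"
      then obtain q :: int where "2 * pi * of_int s / real N = of_int (2 * q) * pi"
        unfolding z_def ee_def exp_eq_1 by auto
      then have "of_int s = real N * of_int q" using assms by (simp add: field_simps)
      then have "s = int N * q" by (metis of_int_eq_iff of_int_mult of_int_of_nat_eq)
      with False show False by auto
    qed
    then show ?thesis using False by (simp add: zj geometric_sum zN)
  qed
qed


lemma ee_cis: "ee x = cis x" unfolding ee_def by (simp add: cis_conv_exp)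

lemma one_plus_ee: "1 + ee \<theta> = ee (\<theta>/2) * complex_of_real (2 * cos (\<theta>/2))"
proof -
  have c: "cos \<theta> = 2 * cos (\<theta>/2) * cos (\<theta>/2) - 1" using cos_double_cos[of "\<theta>/2"] by (simp add: power2_eq_square)
  have s: "sin \<theta> = 2 * sin (\<theta>/2) * cos (\<theta>/2)" using sin_double[of "\<theta>/2"] by simp
  show ?thesis unfolding ee_cis
    by (simp add: complex_eq_iff c s algebra_simps)
qed

lemma norm_one_plus_ee: "norm (1 + ee \<theta>) = 2 * \<bar>cos (\<theta>/2)\<bar>"
  by (simp add: one_plus_ee norm_mult)

lemma bin_half: "bin n (1/2) m = (if 0 \<le> m \<and> m \<le> int n then real (n choose nat m) / 2 ^ n else 0)"
proof -
  have "(1/2::real) ^ nat m * (1 - 1/2) ^ (n - nat m) = 1 / 2 ^ n" if "m \<le> int n" "0 \<le> m"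
  proof -
    have "(1/2::real) ^ nat m * (1/2) ^ (n - nat m) = (1/2) ^ (nat m + (n - nat m))" by (simp add: power_add)
    also have "nat m + (n - nat m) = n" using that by linarith
    finally show ?thesis by (simp add: power_one_over)
  qed
  then show ?thesis unfolding bin_def by (auto simp: mult.assoc)
qed

lemma bin_nonneg: "bin n (1/2) m \<ge> 0" by (simp add: bin_half)

definition phi :: "nat \<Rightarrow> real \<Rightarrow> complex" where
  "phi n \<theta> = (\<Sum>u\<le>n. complex_of_real (bin n (1/2) (int u)) * ee (real u * \<theta>))"

lemma phi_eq: "phi n \<theta> = ((1 + ee \<theta>) / 2) ^ n"
proof -
  have "(ee \<theta> + 1) ^ n = (\<Sum>k\<le>n. of_nat (n choose k) * ee \<theta> ^ k)"
    by (simp add: binomial_ring)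
  then have "((1 + ee \<theta>) / 2) ^ n = (\<Sum>k\<le>n. of_nat (n choose k) * ee \<theta> ^ k) / 2 ^ n"
    by (simp add: power_divide add.commute)
  also have "\<dots> = phi n \<theta>"
    unfolding phi_def sum_divide_distrib
    by (intro sum.cong refl) (simp add: bin_half ee_nat_mult)
  finally show ?thesis by simp
qed

lemma norm_phi: "norm (phi n \<theta>) = \<bar>cos (\<theta>/2)\<bar> ^ n"
  by (simp add: phi_eq norm_power norm_divide norm_one_plus_ee)

lemma inversion:
  fixes N :: nat and m :: int
  assumes "N > 0" "int n - int N < m" "m < int N"
  shows "complex_of_real (bin n (1/2) m) =
     (\<Sum>j<N. phi n (2 * pi * real j / real N) * ee (- (of_int m * (2 * pi * real j / real N)))) / of_nat N"
proof -
  have "(\<Sum>j<N. phi n (2 * pi * real j / real N) * ee (- (of_int m * (2 * pi * real j / real N))))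
      = (\<Sum>j<N. \<Sum>u\<le>n. complex_of_real (bin n (1/2) (int u)) * ee (2 * pi * real j * of_int (int u - m) / real N))"
    unfolding phi_def sum_distrib_right
    by (intro sum.cong refl) (simp add: mult.assoc ee_add[symmetric] algebra_simps add_divide_distrib diff_divide_distrib)
  also have "\<dots> = (\<Sum>u\<le>n. complex_of_real (bin n (1/2) (int u)) * (\<Sum>j<N. ee (2 * pi * real j * of_int (int u - m) / real N)))"
    by (subst sum.swap) (simp add: sum_distrib_left)
  also have "\<dots> = (\<Sum>u\<le>n. if int u = m then complex_of_real (bin n (1/2) (int u)) * of_nat N else 0)"
  proof (intro sum.cong refl)
    fix u assume u: "u \<in> {..n}"
    have dv: "int N dvd (int u - m) \<longleftrightarrow> int u = m"
    proof
      assume "int N dvd (int u - m)"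
      then obtain q where q: "int u - m = int N * q" by (auto elim: dvdE)
      have "- int N < int u - m" "int u - m < int N" using u assms by auto
      then have "q = 0" unfolding q using assms mult_less_cancel_left_pos[of "int N" q 1] mult_less_cancel_left_pos[of "int N" "-1" q]
        by auto
      then show "int u = m" using q by simp
    qed simp
    then show "complex_of_real (bin n (1/2) (int u)) * (\<Sum>j<N. ee (2 * pi * real j * of_int (int u - m) / real N))
       = (if int u = m then complex_of_real (bin n (1/2) (int u)) * of_nat N else 0)"
      unfolding ortho[OF assms(1)] dv by simp
  qed
  also have "\<dots> = complex_of_real (bin n (1/2) m) * of_nat N"
  proof (cases "0 \<le> m \<and> m \<le> int n")
    case True
    then have "{..n} \<inter> {u. int u = m} = {nat m}" by auto
    then show ?thesis by (simp add: sum.If_cases True)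
  next
    case False
    then have "{..n} \<inter> {u. int u = m} = {}" by auto
    then show ?thesis using False by (auto simp: sum.If_cases bin_half)
  qed
  finally show ?thesis using assms(1) by simp
qed


lemma cnj_ee: "cnj (ee x) = ee (- x)"
  unfolding ee_cis by (simp add: cis_cnj)

lemma phi_neg: "phi n (- \<theta>) = cnj (phi n \<theta>)"
  unfolding phi_def by (simp add: cnj_ee)

lemma gamma_exact:
  fixes N p :: nat
  assumes "p < N"
  shows "(\<Sum>j<N. \<bar>cos ((2 * pi * real j / real N) / 2)\<bar> ^ (2 * p)) = real N * (real ((2*p) choose p) / 4 ^ p)"
proof -
  have N0: "N > 0" using assms by simp
  define th where "th j = 2 * pi * real j / real N" for j :: nat
  have sq: "(\<Sum>v\<le>p. (bin p (1/2) (int v))\<^sup>2) = real ((2*p) choose p) / 4 ^ p"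
  proof -
    have h4: "((2::real) ^ p)\<^sup>2 = 4 ^ p" by (induct p) (simp_all add: power2_eq_square algebra_simps)
    have "(\<Sum>v\<le>p. (bin p (1/2) (int v))\<^sup>2) = (\<Sum>v\<le>p. real ((p choose v)^2)) / 4 ^ p"
      unfolding sum_divide_distrib by (intro sum.cong refl) (simp add: bin_half power_divide h4)
    also have "(\<Sum>v\<le>p. real ((p choose v)^2)) = real ((2*p) choose p)"
      by (simp only: of_nat_sum[symmetric] choose_square_sum)
    finally show ?thesis .
  qed
  have "complex_of_real (\<Sum>v\<le>p. (bin p (1/2) (int v))\<^sup>2)
      = (\<Sum>v\<le>p. complex_of_real (bin p (1/2) (int v)) * complex_of_real (bin p (1/2) (int v)))"
    by (simp add: power2_eq_square)
  also have "\<dots> = (\<Sum>v\<le>p. complex_of_real (bin p (1/2) (int v)) *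
        ((\<Sum>j<N. phi p (th j) * ee (- (of_int (int v) * th j))) / of_nat N))"
  proof (intro sum.cong refl arg_cong2[where f="(*)"])
    fix v assume "v \<in> {..p}"
    then show "complex_of_real (bin p (1/2) (int v)) = (\<Sum>j<N. phi p (th j) * ee (- (of_int (int v) * th j))) / of_nat N"
      unfolding th_def by (intro inversion) (use assms in auto)
  qed
  also have "\<dots> = (\<Sum>j<N. phi p (th j) * phi p (- th j)) / of_nat N"
    unfolding phi_def sum_divide_distrib sum_distrib_left sum_distrib_right
    by (subst sum.swap) (simp add: algebra_simps)
  also have "(\<Sum>j<N. phi p (th j) * phi p (- th j)) = (\<Sum>j<N. complex_of_real (\<bar>cos (th j / 2)\<bar> ^ (2 * p)))"
  proof (intro sum.cong refl)
    fix j
    have "phi p (th j) * phi p (- th j) = complex_of_real ((norm (phi p (th j)))\<^sup>2)"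
      by (simp only: phi_neg complex_norm_square)
    also have "\<dots> = complex_of_real (\<bar>cos (th j / 2)\<bar> ^ (2 * p))"
      by (simp add: norm_phi power_mult[symmetric] mult.commute)
    finally show "phi p (th j) * phi p (- th j) = complex_of_real (\<bar>cos (th j / 2)\<bar> ^ (2 * p))" .
  qed
  finally have "complex_of_real (\<Sum>v\<le>p. (bin p (1/2) (int v))\<^sup>2) =
      complex_of_real (\<Sum>j<N. \<bar>cos (th j / 2)\<bar> ^ (2 * p)) / of_nat N" by simp
  then have "(\<Sum>v\<le>p. (bin p (1/2) (int v))\<^sup>2) = (\<Sum>j<N. \<bar>cos (th j / 2)\<bar> ^ (2 * p)) / real N"
    by (metis of_real_divide of_real_eq_iff of_real_of_nat_eq)
  then show ?thesis using N0 sq unfolding th_def by (simp add: field_simps)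
qed

lemma central_rec: "real ((2 * Suc p) choose Suc p) = real ((2*p) choose p) * (2 * (2 * real p + 1)) / (real p + 1)"
proof -
  have a: "real ((2 * Suc p) choose Suc p) = fact (2 * Suc p) / (fact (Suc p) * fact (Suc p))"
    using binomial_fact[of "Suc p" "2 * Suc p", where 'a=real] by simp
  have b: "real ((2*p) choose p) = fact (2 * p) / (fact p * fact p)"
    by (simp add: binomial_fact mult_2)
  have c: "fact (2 * Suc p) = (2 * real p + 2) * (2 * real p + 1) * (fact (2*p) :: real)"
    by (simp add: fact_Suc algebra_simps)  
  have g: "\<And>F f q::real. f > 0 \<Longrightarrow> q \<ge> 0 \<Longrightarrow>
     (2*q+2)*(2*q+1)*F / (((q+1)*f)*((q+1)*f)) = F / (f*f) * (2*(2*q+1)) / (q+1)"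
    by (simp add: divide_simps) (simp add: algebra_simps)
  show ?thesis unfolding a b c fact_Suc of_nat_mult using g[of "fact p" "real p" "fact (2*p)"] by (simp add: algebra_simps)
qed

lemma central_bound: "(real ((2*p) choose p) / 4 ^ p)\<^sup>2 * (2 * real p + 1) \<le> 1"
proof (induction p)
  case 0 then show ?case by simp
next
  case (Suc p)
  define c where "c = real ((2*p) choose p) / 4 ^ p"
  have d_eq: "real ((2 * Suc p) choose Suc p) / 4 ^ Suc p = c * ((2 * real p + 1) / (2 * (real p + 1)))"
  proof -
    have "(4::real) ^ p > 0" by simp
    moreover have "real p + 1 > 0" by simp
    have g: "\<And>C P q::real. P > 0 \<Longrightarrow> q \<ge> 0 \<Longrightarrow>
       C * (2 * (2 * q + 1)) / (q + 1) / (4 * P) = C / P * ((2 * q + 1) / (2 * (q + 1)))"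
      by (simp add: divide_simps) (simp add: algebra_simps)
    show ?thesis unfolding central_rec c_def power_Suc using g[of "4^p" "real p"] by simp
  qed
  have g3: "\<And>c q::real. q \<ge> 0 \<Longrightarrow>
     (c * ((2 * q + 1) / (2 * (q + 1))))\<^sup>2 * (2 * (q + 1) + 1) = (c\<^sup>2 * (2 * q + 1)) * ((2 * q + 1) * (2 * q + 3) / (2 * (q + 1))\<^sup>2)"
    by (simp add: power2_eq_square divide_simps)
  have "(real ((2 * Suc p) choose Suc p) / 4 ^ Suc p)\<^sup>2 * (2 * real (Suc p) + 1)
      = (c\<^sup>2 * (2 * real p + 1)) * ((2 * real p + 1) * (2 * real p + 3) / (2 * (real p + 1))\<^sup>2)"
    unfolding d_eq using g3[of "real p"] by (simp add: algebra_simps)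
  also have "\<dots> \<le> 1 * 1"
  proof (intro mult_mono)
    show "c\<^sup>2 * (2 * real p + 1) \<le> 1" using Suc c_def by simp
    have pos: "0 < (2 * (real p + 1))\<^sup>2" by simp
    show "(2 * real p + 1) * (2 * real p + 3) / (2 * (real p + 1))\<^sup>2 \<le> 1"
      using pos by (simp only: divide_le_eq_1_pos) (simp add: power2_eq_square algebra_simps)
  qed auto
  finally show ?case by simp
qed


lemma abs_cos_shift: "\<bar>cos (x + of_int k * pi)\<bar> = \<bar>cos x\<bar>"
proof -
  have s: "sin (of_int k * pi) = 0" using sin_zero_iff_int2 by blast
  have "(sin (of_int k * pi))\<^sup>2 + (cos (of_int k * pi))\<^sup>2 = 1" by simp
  then have "(cos (of_int k * pi))\<^sup>2 = 1" using s by simp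
  then have "\<bar>cos (of_int k * pi)\<bar> = 1" by (simp add: power2_eq_1_iff) (metis abs_neg_one abs_one)
  then show ?thesis by (simp add: cos_add s abs_mult)
qed

lemma cos_taylor4: "cos (y::real) \<le> 1 - y\<^sup>2 / 2 + y ^ 4 / 24"
proof -
  obtain t where "cos y = (\<Sum>m<4. cos_coeff m * y ^ m) + (cos (t + 1/2 * real 4 * pi) / fact 4) * y ^ 4"
    using Maclaurin_cos_expansion[of y 4] by blast
  also have "(\<Sum>m<4. cos_coeff m * y ^ m) = 1 - y\<^sup>2 / 2"
  proof -
    have "{..<4::nat} = {0,1,2,3}" by auto
    then show ?thesis by (simp add: cos_coeff_def power2_eq_square)
  qed
  also have "cos (t + 1/2 * real 4 * pi) = cos t"
    by (simp add: cos_add)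
  also have "cos t / fact 4 * y ^ 4 \<le> 1 / fact 4 * y ^ 4"
    by (intro mult_right_mono divide_right_mono) (auto simp: zero_le_even_power)
  finally show ?thesis by (simp add: fact_numeral)
qed

definition gam :: real where "gam = 19/48"

lemma cos_bound:
  assumes "\<bar>y\<bar> \<le> pi / 2"
  shows "\<bar>cos y\<bar> \<le> exp (- gam * y\<^sup>2)"
proof -
  have c0: "0 \<le> cos y" using assms by (intro cos_ge_zero) auto
  have "y\<^sup>2 \<le> (pi/2)\<^sup>2" using power_mono[OF assms abs_ge_zero, of 2] by simp
  also have "(pi/2)\<^sup>2 \<le> 10 / 4"
  proof -
    have p1: "pi \<le> 3.16" using pi_approx by (simp add: abs_le_iff)
    have "pi * pi \<le> 3.16 * 3.16" by (rule mult_mono) (use p1 in auto)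
    then have "pi * pi \<le> 10" by simp
    then show ?thesis by (simp add: power2_eq_square)
  qed
  finally have y2: "y\<^sup>2 \<le> 10 / 4" .
  have "y ^ 4 = y\<^sup>2 * y\<^sup>2" by (simp add: power2_eq_square numeral_eq_Suc)
  also have "\<dots> \<le> y\<^sup>2 * (10/4)" using y2 by (intro mult_left_mono) auto
  finally have y4: "y ^ 4 \<le> y\<^sup>2 * (10/4)" .
  have "\<bar>cos y\<bar> = cos y" using c0 by simp
  also have "\<dots> \<le> 1 - y\<^sup>2 / 2 + y ^ 4 / 24" by (rule cos_taylor4)
  also have "\<dots> \<le> 1 + (- gam * y\<^sup>2)" using y4 unfolding gam_def by simp
  also have "\<dots> \<le> exp (- gam * y\<^sup>2)" by (rule exp_ge_add_one_self)
  finally show ?thesis .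
qed


lemma angle:
  fixes T :: "'a set" and ph :: "'a \<Rightarrow> real"
  assumes T: "finite T" "T \<noteq> {}" and sum: "(\<Sum>t\<in>T. ph t) = \<xi>" and xi: "2 \<le> \<bar>\<xi>\<bar>" "\<bar>\<xi>\<bar> \<le> pi"
  shows "(\<Prod>t\<in>T. \<bar>cos (ph t / 2)\<bar>) \<le> exp (- gam / real (card T))"
proof -
  define k where "k t = round (ph t / (2 * pi))" for t
  define d where "d t = ph t - 2 * pi * of_int (k t)" for t
  have dle: "\<bar>d t\<bar> \<le> pi" for t
  proof -
    have "\<bar>of_int (k t) - ph t / (2 * pi)\<bar> \<le> 1/2" unfolding k_def by (rule of_int_round_abs_le)
    moreover have "2 * pi * of_int (k t) - ph t = (2 * pi) * (of_int (k t) - ph t / (2 * pi))"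
      by (simp add: field_simps)
    ultimately have "\<bar>2 * pi * of_int (k t) - ph t\<bar> \<le> (2 * pi) * (1/2)"
      using pi_gt_zero by (simp add: abs_mult)
    then have "\<bar>2 * pi * of_int (k t) - ph t\<bar> \<le> pi" by simp
    then show ?thesis unfolding d_def by simp
  qed
  have cosd: "\<bar>cos (ph t / 2)\<bar> \<le> exp (- gam * (d t / 2)\<^sup>2)" for t
  proof -
    have e: "ph t / 2 = d t / 2 + of_int (k t) * pi" unfolding d_def by (simp add: field_simps)
    have "\<bar>cos (ph t / 2)\<bar> = \<bar>cos (d t / 2)\<bar>" unfolding e by (rule abs_cos_shift)
    also have "\<dots> \<le> exp (- gam * (d t / 2)\<^sup>2)" by (rule cos_bound) (use dle[of t] in simp)
    finally show ?thesis .
  qed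
  have "(\<Prod>t\<in>T. \<bar>cos (ph t / 2)\<bar>) \<le> (\<Prod>t\<in>T. exp (- gam * (d t / 2)\<^sup>2))"
    by (intro prod_mono) (use cosd in auto)
  also have "\<dots> = exp (\<Sum>t\<in>T. - gam * (d t / 2)\<^sup>2)" using T by (simp add: exp_sum)
  also have "(\<Sum>t\<in>T. - gam * (d t / 2)\<^sup>2) = - gam / 4 * (\<Sum>t\<in>T. (d t)\<^sup>2)"
    by (simp add: sum_distrib_left power_divide)
  finally have A: "(\<Prod>t\<in>T. \<bar>cos (ph t / 2)\<bar>) \<le> exp (- gam / 4 * (\<Sum>t\<in>T. (d t)\<^sup>2))" .
  define K where "K = (\<Sum>t\<in>T. k t)"
  have sd: "(\<Sum>t\<in>T. d t) = \<xi> - 2 * pi * of_int K"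
    unfolding d_def K_def sum_subtractf sum by (simp add: sum_distrib_left)
  have ge2: "2 \<le> \<bar>\<xi> - 2 * pi * of_int K\<bar>"
  proof (cases "K = 0")
    case True then show ?thesis using xi by simp
  next
    case False
    then have "1 \<le> \<bar>of_int K :: real\<bar>" by linarith
    then have "2 * pi \<le> \<bar>2 * pi * of_int K\<bar>" using pi_gt_zero by (simp add: abs_mult)
    then show ?thesis using xi pi_gt3 by linarith
  qed
  have "4 \<le> (\<Sum>t\<in>T. d t)\<^sup>2" unfolding sd using power_mono[OF ge2, of 2] by simp
  also have "\<dots> \<le> (\<Sum>t\<in>T. (d t)\<^sup>2) * real (card T)" by (rule sum_squared_le_sum_of_squares)
  finally have B: "4 / real (card T) \<le> (\<Sum>t\<in>T. (d t)\<^sup>2)" using T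
    by (simp add: divide_le_eq card_gt_0_iff)
  have "- gam / 4 * (\<Sum>t\<in>T. (d t)\<^sup>2) \<le> - gam / 4 * (4 / real (card T))"
    using B unfolding gam_def by simp
  also have "\<dots> = - gam / real (card T)" by simp
  finally show ?thesis using A by (meson exp_le_cancel_iff order_trans)
qed


definition th :: "nat \<Rightarrow> nat \<Rightarrow> real" where "th N j = 2 * pi * real j / real N"

lemma sum_shift_int:
  "(\<Sum>r\<in>{- c..int n - c}. f r) = (\<Sum>u\<le>n. f (int u - c))"
  by (rule sum.reindex_bij_witness[where j="\<lambda>r. nat (r + c)" and i="\<lambda>u. int u - c"]) auto

lemma phi_shift:
  "(\<Sum>r\<in>{- c..int n - c}. complex_of_real (bin n (1/2) (r + c)) * ee (of_int r * \<psi>))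
     = ee (- (of_int c * \<psi>)) * phi n \<psi>"
  unfolding sum_shift_int phi_def sum_distrib_left
  by (intro sum.cong refl) (simp add: ee_add[symmetric] algebra_simps)

lemma conv_eq:
  fixes T :: "'a set" and a :: "'a \<Rightarrow> int" and N :: nat
  assumes T: "finite T" "t0 \<in> T" and D: "\<And>t. t \<in> T \<Longrightarrow> \<bar>a t - a t0\<bar> + int n < int N"
  shows "(\<Sum>r\<in>{- a t0..int n - a t0}. ee (\<xi> * of_int r) * complex_of_real (\<Prod>t\<in>T. bin n (1/2) (r + a t)))
    = (\<Sum>J\<in>PiE (T - {t0}) (\<lambda>_. {..<N}).
         (\<Prod>t\<in>T - {t0}. phi n (th N (J t)) * ee (- (of_int (a t) * th N (J t)))) *
         (ee (- (of_int (a t0) * (\<xi> - (\<Sum>t\<in>T - {t0}. th N (J t))))) * phi n (\<xi> - (\<Sum>t\<in>T - {t0}. th N (J t)))))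
      / of_nat N ^ card (T - {t0})"
proof -
  define T' where "T' = T - {t0}"
  have fT': "finite T'" using T unfolding T'_def by simp
  have N0: "N > 0" using D[OF T(2)] by simp
  define P where "P J = (\<Prod>t\<in>T'. phi n (th N (J t)) * ee (- (of_int (a t) * th N (J t))))" for J
  define ps where "ps J = \<xi> - (\<Sum>t\<in>T'. th N (J t))" for J
  define PJ where "PJ = PiE T' (\<lambda>_. {..<N})"
  have step: "ee (\<xi> * of_int r) * complex_of_real (\<Prod>t\<in>T. bin n (1/2) (r + a t))
      = (\<Sum>J\<in>PJ. P J * (complex_of_real (bin n (1/2) (r + a t0)) * ee (of_int r * ps J))) / of_nat N ^ card T'"
    if r: "r \<in> {- a t0..int n - a t0}" for r
  proof -
    have inv: "complex_of_real (bin n (1/2) (r + a t)) =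
        (\<Sum>j<N. phi n (th N j) * ee (- (of_int (r + a t) * th N j))) / of_nat N" if t: "t \<in> T'" for t
      unfolding th_def
    proof (rule inversion[OF N0])
      have "\<bar>a t - a t0\<bar> + int n < int N" using D t unfolding T'_def by auto
      then show "int n - int N < r + a t" "r + a t < int N" using r by auto
    qed
    have "complex_of_real (\<Prod>t\<in>T. bin n (1/2) (r + a t))
        = complex_of_real (bin n (1/2) (r + a t0)) * (\<Prod>t\<in>T'. complex_of_real (bin n (1/2) (r + a t)))"
      unfolding T'_def using T by (simp add: prod.remove)
    also have "(\<Prod>t\<in>T'. complex_of_real (bin n (1/2) (r + a t)))
        = (\<Prod>t\<in>T'. (\<Sum>j<N. phi n (th N j) * ee (- (of_int (r + a t) * th N j)))) / of_nat N ^ card T'"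
      using inv by (simp add: prod_dividef)
    also have "(\<Prod>t\<in>T'. (\<Sum>j<N. phi n (th N j) * ee (- (of_int (r + a t) * th N j))))
        = (\<Sum>J\<in>PJ. \<Prod>t\<in>T'. phi n (th N (J t)) * ee (- (of_int (r + a t) * th N (J t))))"
      unfolding PJ_def by (rule prod_sum_PiE) (use fT' in auto)
    also have "\<dots> = (\<Sum>J\<in>PJ. P J * ee (- (of_int r * (\<Sum>t\<in>T'. th N (J t)))))"
    proof (intro sum.cong refl)
      fix J
      have "(\<Prod>t\<in>T'. phi n (th N (J t)) * ee (- (of_int (r + a t) * th N (J t))))
          = (\<Prod>t\<in>T'. (phi n (th N (J t)) * ee (- (of_int (a t) * th N (J t)))) * ee (- (of_int r * th N (J t))))"
        by (intro prod.cong refl) (simp add: ee_add[symmetric] algebra_simps)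
      also have "\<dots> = P J * (\<Prod>t\<in>T'. ee (- (of_int r * th N (J t))))"
        unfolding P_def by (rule prod.distrib)
      also have "(\<Prod>t\<in>T'. ee (- (of_int r * th N (J t)))) = ee (- (of_int r * (\<Sum>t\<in>T'. th N (J t))))"
        using fT' by (induction T' rule: finite_induct) (simp_all add: ee_add[symmetric] algebra_simps)
      finally show "(\<Prod>t\<in>T'. phi n (th N (J t)) * ee (- (of_int (r + a t) * th N (J t))))
          = P J * ee (- (of_int r * (\<Sum>t\<in>T'. th N (J t))))" .
    qed
    finally have "complex_of_real (\<Prod>t\<in>T. bin n (1/2) (r + a t)) =
       complex_of_real (bin n (1/2) (r + a t0)) * ((\<Sum>J\<in>PJ. P J * ee (- (of_int r * (\<Sum>t\<in>T'. th N (J t))))) / of_nat N ^ card T')" .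
    moreover have eq: "\<And>J. ee (of_int r * ps J) = ee (\<xi> * of_int r) * ee (- (of_int r * (\<Sum>t\<in>T'. th N (J t))))"
      by (simp add: ps_def ee_add[symmetric] algebra_simps)
    ultimately show ?thesis
      unfolding eq by (simp add: sum_divide_distrib sum_distrib_left mult_ac)
  qed
  have "(\<Sum>r\<in>{- a t0..int n - a t0}. ee (\<xi> * of_int r) * complex_of_real (\<Prod>t\<in>T. bin n (1/2) (r + a t)))
      = (\<Sum>r\<in>{- a t0..int n - a t0}. (\<Sum>J\<in>PJ. P J * (complex_of_real (bin n (1/2) (r + a t0)) * ee (of_int r * ps J))) / of_nat N ^ card T')"
    by (intro sum.cong refl step)
  also have "\<dots> = (\<Sum>J\<in>PJ. P J * (\<Sum>r\<in>{- a t0..int n - a t0}. complex_of_real (bin n (1/2) (r + a t0)) * ee (of_int r * ps J))) / of_nat N ^ card T'"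
    unfolding sum_divide_distrib[symmetric] sum_distrib_left
    by (subst sum.swap) simp
  also have "\<dots> = (\<Sum>J\<in>PJ. P J * (ee (- (of_int (a t0) * ps J)) * phi n (ps J))) / of_nat N ^ card T'"
    by (simp add: phi_shift)
  finally show ?thesis unfolding P_def ps_def PJ_def T'_def .
qed


lemma conv_bound:
  fixes T :: "'a set" and a :: "'a \<Rightarrow> int" and N m :: nat
  assumes T: "finite T" "t0 \<in> T" and D: "\<And>t. t \<in> T \<Longrightarrow> \<bar>a t - a t0\<bar> + int n < int N"
    and xi: "2 \<le> \<bar>\<xi>\<bar>" "\<bar>\<xi>\<bar> \<le> pi" and m: "m \<le> n"
  shows "norm (\<Sum>r\<in>{- a t0..int n - a t0}. ee (\<xi> * of_int r) * complex_of_real (\<Prod>t\<in>T. bin n (1/2) (r + a t)))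
    \<le> exp (- gam * real (n - m) / real (card T)) * ((\<Sum>j<N. \<bar>cos (th N j / 2)\<bar> ^ m) / real N) ^ (card T - 1)"
proof -
  define T' where "T' = T - {t0}"
  have fT': "finite T'" using T unfolding T'_def by simp
  have cT': "card T' = card T - 1" unfolding T'_def using T by simp
  have N0: "N > 0" using D[OF T(2)] by simp
  define PJ where "PJ = PiE T' (\<lambda>_. {..<N})"
  define ps where "ps J = \<xi> - (\<Sum>t\<in>T'. th N (J t))" for J
  define X where "X J = (\<Prod>t\<in>T'. phi n (th N (J t)) * ee (- (of_int (a t) * th N (J t)))) *
         (ee (- (of_int (a t0) * ps J)) * phi n (ps J))" for J
  define E where "E = exp (- gam * real (n - m) / real (card T))"
  have pw: "norm (X J) \<le> E * (\<Prod>t\<in>T'. \<bar>cos (th N (J t) / 2)\<bar> ^ m)" for J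
  proof -
    define ph where "ph t = (if t = t0 then ps J else th N (J t))" for t
    define c where "c t = \<bar>cos (ph t / 2)\<bar>" for t
    have sumph: "(\<Sum>t\<in>T. ph t) = \<xi>"
    proof -
      have "(\<Sum>t\<in>T. ph t) = ph t0 + (\<Sum>t\<in>T'. ph t)" unfolding T'_def using T by (simp add: sum.remove)
      also have "(\<Sum>t\<in>T'. ph t) = (\<Sum>t\<in>T'. th N (J t))" unfolding T'_def ph_def by (intro sum.cong) auto
      finally show ?thesis by (simp add: ph_def ps_def)
    qed
    have ang: "(\<Prod>t\<in>T. c t) \<le> exp (- gam / real (card T))"
      unfolding c_def using angle[OF T(1) _ sumph xi] T by auto
    have "norm (X J) = (\<Prod>t\<in>T'. \<bar>cos (th N (J t) / 2)\<bar> ^ n) * \<bar>cos (ps J / 2)\<bar> ^ n"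
      unfolding X_def by (simp add: norm_mult prod_norm[symmetric] norm_phi)
    also have "\<dots> = (\<Prod>t\<in>T. c t ^ n)"
    proof -
      have "(\<Prod>t\<in>T. c t ^ n) = c t0 ^ n * (\<Prod>t\<in>T'. c t ^ n)" unfolding T'_def using T by (simp add: prod.remove)
      also have "(\<Prod>t\<in>T'. c t ^ n) = (\<Prod>t\<in>T'. \<bar>cos (th N (J t) / 2)\<bar> ^ n)"
        unfolding T'_def c_def ph_def by (intro prod.cong) auto
      finally show ?thesis by (simp add: c_def ph_def)
    qed
    also have "\<dots> = (\<Prod>t\<in>T. c t) ^ (n - m) * (\<Prod>t\<in>T. c t ^ m)"
    proof -
      have "(\<Prod>t\<in>T. c t ^ n) = (\<Prod>t\<in>T. c t ^ (n - m) * c t ^ m)"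
        by (intro prod.cong refl) (use m in \<open>simp add: power_add[symmetric]\<close>)
      then show ?thesis by (simp add: prod.distrib prod_power_distrib)
    qed
    also have "\<dots> \<le> E * (\<Prod>t\<in>T'. \<bar>cos (th N (J t) / 2)\<bar> ^ m)"
    proof (rule mult_mono)
      have "(\<Prod>t\<in>T. c t) ^ (n - m) \<le> exp (- gam / real (card T)) ^ (n - m)"
        by (rule power_mono[OF ang]) (simp add: c_def prod_nonneg)
      also have "\<dots> = E" unfolding E_def by (simp add: exp_of_nat_mult[symmetric] field_simps)
      finally show "(\<Prod>t\<in>T. c t) ^ (n - m) \<le> E" .
      have "(\<Prod>t\<in>T. c t ^ m) = c t0 ^ m * (\<Prod>t\<in>T'. c t ^ m)" unfolding T'_def using T by (simp add: prod.remove)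
      also have "\<dots> \<le> 1 * (\<Prod>t\<in>T'. c t ^ m)"
        by (intro mult_right_mono) (auto simp: c_def power_le_one prod_nonneg)
      also have "(\<Prod>t\<in>T'. c t ^ m) = (\<Prod>t\<in>T'. \<bar>cos (th N (J t) / 2)\<bar> ^ m)"
        unfolding T'_def c_def ph_def by (intro prod.cong) auto
      finally show "(\<Prod>t\<in>T. c t ^ m) \<le> (\<Prod>t\<in>T'. \<bar>cos (th N (J t) / 2)\<bar> ^ m)" by simp
    qed (auto simp: E_def c_def prod_nonneg)
    finally show ?thesis .
  qed
  have "norm (\<Sum>r\<in>{- a t0..int n - a t0}. ee (\<xi> * of_int r) * complex_of_real (\<Prod>t\<in>T. bin n (1/2) (r + a t)))
      = norm ((\<Sum>J\<in>PJ. X J) / of_nat N ^ card T')"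
    using conv_eq[of T t0 a n N \<xi>, OF T D] unfolding X_def ps_def PJ_def T'_def by simp
  also have "\<dots> \<le> (\<Sum>J\<in>PJ. norm (X J)) / real N ^ card T'"
    by (simp add: norm_divide norm_power norm_sum divide_right_mono)
  also have "\<dots> \<le> (\<Sum>J\<in>PJ. E * (\<Prod>t\<in>T'. \<bar>cos (th N (J t) / 2)\<bar> ^ m)) / real N ^ card T'"
    by (intro divide_right_mono sum_mono pw) simp
  also have "(\<Sum>J\<in>PJ. E * (\<Prod>t\<in>T'. \<bar>cos (th N (J t) / 2)\<bar> ^ m)) = E * (\<Prod>t\<in>T'. \<Sum>j<N. \<bar>cos (th N j / 2)\<bar> ^ m)"
    unfolding PJ_def sum_distrib_left[symmetric] by (subst prod_sum_PiE) (use fT' in auto)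
  also have "(\<Prod>t\<in>T'. \<Sum>j<N. \<bar>cos (th N j / 2)\<bar> ^ m) = (\<Sum>j<N. \<bar>cos (th N j / 2)\<bar> ^ m) ^ card T'"
    by simp
  finally show ?thesis unfolding E_def cT' by (simp add: power_divide)
qed

lemma amgm: fixes M s :: real assumes "M > 0" shows "1.25 * s \<le> 2 * M + (19/96) * s\<^sup>2 / M"
proof -
  have "0 \<le> 2 * (M - 0.3125 * s)\<^sup>2 + (19/96 - 0.1953125) * s\<^sup>2" by simp
  then have "1.25 * s * M \<le> 2 * M * M + (19/96) * s\<^sup>2" by (simp add: power2_eq_square algebra_simps)
  then show ?thesis using assms by (simp add: field_simps power2_eq_square)
qed

lemma numeric:
  fixes n M p :: nat and \<alpha> \<Gamma> :: real
  assumes n3: "n \<ge> 3" and a0: "0 < \<alpha>" and aub: "\<alpha> \<le> sqrt n / (4 * exp 2 * sqrt (2 * pi))"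
    and G0: "0 \<le> \<Gamma>" and Gb: "\<Gamma>\<^sup>2 * (2 * real p + 1) \<le> 1" and p1: "n \<le> 4 * p + 3" and p2: "4 * p \<le> n"
    and M: "M \<ge> 1"
  shows "\<alpha> ^ M * exp (- gam * real (n - 2*p) / real M) * \<Gamma> ^ (M - 1) \<le> 2 * (1/2) ^ M * exp (- sqrt n)"
proof -
  define s where "s = sqrt (real n)"
  have s0: "s > 0" using n3 unfolding s_def by simp
  have s2: "s\<^sup>2 = real n" unfolding s_def by simp
  have e1: "exp 1 \<ge> (2::real)" using exp_ge_add_one_self[of 1] by simp
  have e3: "exp 1 \<le> (3::real)" by (rule exp_le)
  have ex2: "exp 2 = exp 1 * (exp 1 :: real)" by (simp flip: exp_add)
  have E2a: "exp (2::real) \<ge> 4" unfolding ex2 using e1 mult_mono[OF e1 e1] by simp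
  have E2b: "exp (2::real) \<le> 9" unfolding ex2 using mult_mono[OF e3 e3] by simp
  have sq: "sqrt (2 * pi) \<ge> 2.44"
  proof -
    have "(2.44::real) = sqrt (2.44\<^sup>2)" by simp
    also have "\<dots> \<le> sqrt (2 * pi)" using pi_gt3 by (intro real_sqrt_le_mono) (simp add: power2_eq_square)
    finally show ?thesis .
  qed
  have den: "4 * exp 2 * sqrt (2 * pi) \<ge> 39"
  proof -
    have "4 * 4 * 2.44 \<le> 4 * exp 2 * sqrt (2 * pi)"
      by (intro mult_mono) (use E2a sq in auto)
    then show ?thesis by simp
  qed
  have as: "\<alpha> \<le> s / 39"
  proof -
    have "sqrt n / (4 * exp 2 * sqrt (2 * pi)) \<le> sqrt n / 39"
      by (intro divide_left_mono den) auto
    then show ?thesis using aub unfolding s_def by simp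
  qed
  have Gs: "\<Gamma> * s \<le> 2"
  proof -
    have h: "n \<le> 3 * (2 * p + 1)" using p1 by presburger
    have "real n \<le> 3 * (2 * real p + 1)" proof -
      have "real n \<le> real (3 * (2 * p + 1))" using h by (simp only: of_nat_le_iff)
      then show ?thesis by simp
    qed
    then have "\<Gamma>\<^sup>2 * real n \<le> \<Gamma>\<^sup>2 * (3 * (2 * real p + 1))" by (intro mult_left_mono) auto
    also have "\<dots> = 3 * (\<Gamma>\<^sup>2 * (2 * real p + 1))" by (simp add: algebra_simps)
    also have "\<dots> \<le> 3" using Gb by simp
    finally have "(\<Gamma> * s)\<^sup>2 \<le> 2\<^sup>2" using s2 by (simp add: power_mult_distrib)
    then show ?thesis using G0 s0 by (meson abs_le_square_iff abs_of_nonneg le_trans abs_ge_self abs_le_D1 power2_le_iff_abs_le zero_le_numeral)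
  qed
  have aG: "\<alpha> * \<Gamma> \<le> 2 / 39"
  proof -
    have "\<alpha> * \<Gamma> \<le> s / 39 * \<Gamma>" using as G0 by (intro mult_right_mono) auto
    also have "\<dots> = \<Gamma> * s / 39" by simp
    also have "\<dots> \<le> 2 / 39" using Gs by simp
    finally show ?thesis .
  qed
  define E where "E = exp (- gam * real (n - 2*p) / real M)"
  have M0: "real M > 0" using M by simp
  have Eb: "E \<le> exp (- (19/96) * s\<^sup>2 / real M)"
  proof -
    have "real n / 2 \<le> real (n - 2*p)" using p2 by linarith
    then have "(19/96) * s\<^sup>2 / real M \<le> gam * real (n - 2*p) / real M"
      unfolding s2 gam_def using M0 by (intro divide_right_mono) auto
    then show ?thesis unfolding E_def by simp
  qed
  have "\<alpha> ^ M * \<Gamma> ^ (M - 1) = \<alpha> * (\<alpha> * \<Gamma>) ^ (M - 1)"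
    using M by (cases M) (auto simp: power_mult_distrib)
  also have "\<dots> \<le> (s / 39) * ((4/39) * (1/2)) ^ (M - 1)"
  proof -
    have "(\<alpha> * \<Gamma>) ^ (M - 1) \<le> ((4/39) * (1/2)) ^ (M - 1)" by (rule power_mono) (use aG a0 G0 in auto)
    then show ?thesis by (rule mult_mono[OF as]) (use a0 G0 s0 in auto)
  qed
  finally have A: "\<alpha> ^ M * \<Gamma> ^ (M - 1) \<le> (s / 39) * ((4/39) * (1/2)) ^ (M - 1)" .
  have B: "(4/39::real) ^ (M - 1) \<le> exp (- 2 * real (M - 1))"
  proof -
    have "(4/39::real) \<le> exp (-2)"
    proof -
      have "(4/39::real) * exp 2 \<le> 1" using E2b by simp
      then show ?thesis by (simp add: exp_minus field_simps)
    qed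
    then have "(4/39::real) ^ (M - 1) \<le> exp (-2) ^ (M - 1)" by (intro power_mono) auto
    also have "\<dots> = exp (- 2 * real (M - 1))" by (simp add: exp_of_nat_mult[symmetric] mult.commute)
    finally show ?thesis .
  qed
  have C: "exp (- 2 * real (M - 1)) * E \<le> exp 2 * exp (- 1.25 * s)"
  proof -
    have "exp (- 2 * real (M - 1)) * E \<le> exp (- 2 * real (M - 1)) * exp (- (19/96) * s\<^sup>2 / real M)"
      using Eb by simp
    also have "\<dots> = exp (2 - (2 * real M + (19/96) * s\<^sup>2 / real M))"
      using M by (simp add: exp_add[symmetric] of_nat_diff algebra_simps)
    also have "\<dots> \<le> exp (2 - 1.25 * s)" using amgm[OF M0, of s] by simp
    also have "\<dots> = exp 2 * exp (- 1.25 * s)" by (simp add: exp_add[symmetric])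
    finally show ?thesis .
  qed
  have F: "(s / 39) * (exp 2 * exp (- 1.25 * s)) \<le> exp (- s)"
  proof -
    have "(s / 39) * exp 2 \<le> (s / 39) * 9" using E2b s0 by (intro mult_left_mono) auto
    also have "\<dots> \<le> 1 + 0.25 * s" using s0 by simp
    also have "\<dots> \<le> exp (0.25 * s)" by (rule exp_ge_add_one_self)
    finally have "(s / 39) * exp 2 * exp (- 1.25 * s) \<le> exp (0.25 * s) * exp (- 1.25 * s)"
      by (intro mult_right_mono) auto
    also have "\<dots> = exp (- s)" by (simp add: exp_add[symmetric])
    finally show ?thesis by (simp add: mult.assoc)
  qed
  have "\<alpha> ^ M * E * \<Gamma> ^ (M - 1) = (\<alpha> ^ M * \<Gamma> ^ (M - 1)) * E" by simp
  also have "\<dots> \<le> ((s / 39) * ((4/39) * (1/2)) ^ (M - 1)) * E"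
    using A unfolding E_def by (intro mult_right_mono) auto
  also have "\<dots> = (s / 39) * ((4/39) ^ (M - 1) * E) * (1/2) ^ (M - 1)" by (simp only: power_mult_distrib mult_ac)
  also have "\<dots> \<le> (s / 39) * (exp (- 2 * real (M - 1)) * E) * (1/2) ^ (M - 1)"
    using B s0 unfolding E_def by (intro mult_right_mono mult_left_mono) auto
  also have "\<dots> \<le> (s / 39) * (exp 2 * exp (- 1.25 * s)) * (1/2) ^ (M - 1)"
    using C s0 by (intro mult_right_mono mult_left_mono) auto
  also have "\<dots> \<le> exp (- s) * (1/2) ^ (M - 1)"
    using F by (intro mult_right_mono) auto
  also have "\<dots> = 2 * (1/2) ^ M * exp (- s)"
    using M by (cases M) auto
  finally show ?thesis unfolding E_def s_def .
qed

lemma infsum_finite_sum: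
  fixes F :: "'r \<Rightarrow> 'x \<Rightarrow> complex"
  assumes "finite R" "\<And>r. r \<in> R \<Longrightarrow> F r summable_on A"
  shows "(\<lambda>x. \<Sum>r\<in>R. F r x) summable_on A \<and> (\<Sum>r\<in>R. infsum (F r) A) = infsum (\<lambda>x. \<Sum>r\<in>R. F r x) A"
  using assms
proof (induction R rule: finite_induct)
  case empty then show ?case by simp
next
  case (insert r R)
  have s1: "F r summable_on A" using insert by simp
  have IH: "(\<lambda>x. \<Sum>r\<in>R. F r x) summable_on A \<and> (\<Sum>r\<in>R. infsum (F r) A) = infsum (\<lambda>x. \<Sum>r\<in>R. F r x) A"
    using insert by auto
  show ?case using IH s1 insert.hyps by (simp add: summable_on_add infsum_add)
qed

lemma prod_summable:
  fixes f :: "'a \<Rightarrow> 'b \<Rightarrow> real"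
  assumes A: "finite A" and s: "\<And>x. x \<in> A \<Longrightarrow> f x summable_on B x"
    and nn: "\<And>x y. x \<in> A \<Longrightarrow> y \<in> B x \<Longrightarrow> f x y \<ge> 0"
    and pos: "\<And>x. x \<in> A \<Longrightarrow> infsum (f x) (B x) > 0"
  shows "(\<lambda>g. \<Prod>x\<in>A. f x (g x)) summable_on PiE A B"
proof (rule ccontr)
  assume ns: "\<not> (\<lambda>g. \<Prod>x\<in>A. f x (g x)) summable_on PiE A B"
  have abs: "(\<lambda>y. norm (f x y)) summable_on B x" if "x \<in> A" for x
  proof -
    have "((\<lambda>y. norm (f x y)) summable_on B x) = (f x summable_on B x)"
      using nn[OF that] by (intro summable_on_cong) auto
    then show ?thesis using s[OF that] by simp
  qed
  have "infsum (\<lambda>g. \<Prod>x\<in>A. f x (g x)) (PiE A B) = (\<Prod>x\<in>A. infsum (f x) (B x))"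
    by (rule infsum_prod_PiE_abs[OF A abs])
  also have "\<dots> > 0" using pos by (intro prod_pos) auto
  finally show False using ns by (simp add: infsum_not_exists)
qed

lemma bin_le:
  assumes "odd n"
  shows "bin n (1/2) m \<le> real ((2 * ((n - 1) div 2)) choose ((n - 1) div 2)) / 4 ^ ((n - 1) div 2)"
proof (cases "0 \<le> m \<and> m \<le> int n")
  case False
  then have "bin n (1/2) m = 0" by (auto simp: bin_half)
  then show ?thesis by simp
next
  case True
  define N where "N = 2 * n + 1"
  define q where "q = (n - 1) div 2"
  have nq: "n = 2 * q + 1" using assms unfolding q_def by presburger
  have N0: "N > 0" unfolding N_def by simp
  have "bin n (1/2) m = norm (complex_of_real (bin n (1/2) m))" by (simp add: bin_nonneg)
  also have "complex_of_real (bin n (1/2) m) =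
     (\<Sum>j<N. phi n (2 * pi * real j / real N) * ee (- (of_int m * (2 * pi * real j / real N)))) / of_nat N"
    by (rule inversion) (use True N0 in \<open>auto simp: N_def\<close>)
  also have "norm \<dots> \<le> (\<Sum>j<N. norm (phi n (2 * pi * real j / real N) * ee (- (of_int m * (2 * pi * real j / real N))))) / real N"
    unfolding norm_divide by (simp only: norm_of_nat) (rule divide_right_mono[OF norm_sum], simp)
  also have "\<dots> = (\<Sum>j<N. \<bar>cos ((2 * pi * real j / real N) / 2)\<bar> ^ n) / real N"
    by (simp only: norm_mult norm_phi norm_ee mult_1_right)
  also have "\<dots> \<le> (\<Sum>j<N. \<bar>cos ((2 * pi * real j / real N) / 2)\<bar> ^ (2 * q)) / real N"
    by (intro divide_right_mono sum_mono power_decreasing) (auto simp: nq)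
  also have "\<dots> = real ((2*q) choose q) / 4 ^ q"
    using gamma_exact[of q N] N0 by (simp add: N_def nq)
  finally show ?thesis unfolding q_def .
qed


lemma alpha_bound:
  fixes n :: nat and \<alpha> :: real
  assumes "\<alpha> \<le> sqrt n / (4 * exp 2 * sqrt (2 * pi))"
  shows "\<alpha> \<le> sqrt n / 39"
proof -
  have e1: "exp 1 \<ge> (2::real)" using exp_ge_add_one_self[of 1] by simp
  have ex2: "exp 2 = exp 1 * (exp 1 :: real)" by (simp flip: exp_add)
  have E2a: "exp (2::real) \<ge> 4" unfolding ex2 using e1 mult_mono[OF e1 e1] by simp
  have sq: "sqrt (2 * pi) \<ge> 2.44"
  proof -
    have "(2.44::real) = sqrt (2.44\<^sup>2)" by simp
    also have "\<dots> \<le> sqrt (2 * pi)" using pi_gt3 by (intro real_sqrt_le_mono) (simp add: power2_eq_square)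
    finally show ?thesis .
  qed
  have den: "4 * exp 2 * sqrt (2 * pi) \<ge> 39"
  proof -
    have "4 * 4 * 2.44 \<le> 4 * exp 2 * sqrt (2 * pi)"
      by (intro mult_mono) (use E2a sq in auto)
    then show ?thesis by simp
  qed
  have "sqrt n / (4 * exp 2 * sqrt (2 * pi)) \<le> sqrt n / 39"
    by (intro divide_left_mono den) auto
  then show ?thesis using assms by simp
qed

theorem lemma2:
  fixes n k :: nat and \<alpha> \<xi> :: real and l :: "nat \<Rightarrow> int"
  assumes "odd n"
    and "0 < \<alpha>" and "\<alpha> \<le> sqrt n / (4 * exp 2 * sqrt (2 * pi))"
    and "k \<ge> 1"
    and "inj_on l {1..k}"
    and "\<And>j. j \<in> {1..k} \<Longrightarrow> 1 \<le> l j \<and> l j \<le> int (n div 2)"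
    and "-pi \<le> \<xi>" and "\<xi> \<le> pi" and "\<bar>\<xi>\<bar> \<ge> 2"
  shows "cmod (\<Sum>\<^sub>\<infinity>r::int. exp (\<i> * complex_of_real (\<xi> * of_int r)) *
            complex_of_real (\<Prod>j=1..k.
              \<alpha> * bin n (1/2) (r + int (n div 4) + l j) /
              (1 - \<alpha> * bin n (1/2) (r + int (n div 4) + l j))))
         \<le> 2 * exp (- sqrt n)"
proof -
  define s where "s = sqrt (real n)"
  have k1: "1 \<in> {1..k}" using assms(4) by simp
  have l1: "1 \<le> l 1" "l 1 \<le> int (n div 2)" using assms(6)[OF k1] by auto
  have "1 \<le> n div 2" using l1 by linarith
  then have n3: "n \<ge> 3" using assms(1) by presburger
  have xi: "2 \<le> \<bar>\<xi>\<bar>" "\<bar>\<xi>\<bar> \<le> pi" using assms(7-9) by auto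
  define p where "p = n div 4"
  define N where "N = 2 * n + 1"
  define \<Gamma> where "\<Gamma> = real ((2*p) choose p) / 4 ^ p"
  define Gp where "Gp = real ((2 * ((n - 1) div 2)) choose ((n - 1) div 2)) / 4 ^ ((n - 1) div 2)"
  have ble: "bin n (1/2) m \<le> Gp" for m using bin_le[OF assms(1)] unfolding Gp_def by blast
  have Gp0: "Gp \<ge> 0" unfolding Gp_def by simp
  have Gpn: "Gp\<^sup>2 * real n \<le> 1"
  proof -
    have "2 * real ((n - 1) div 2) + 1 = real n" using assms(1) n3
    proof -
      have "2 * ((n - 1) div 2) + 1 = n" using assms(1) by presburger
      then show ?thesis by (metis of_nat_1 of_nat_add of_nat_mult of_nat_numeral)
    qed
    then show ?thesis using central_bound[of "(n - 1) div 2"] unfolding Gp_def by simp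
  qed
  have s0: "s > 0" using n3 unfolding s_def by simp
  have Gps: "Gp * s \<le> 1"
  proof -
    have "(Gp * s)\<^sup>2 \<le> 1\<^sup>2" using Gpn unfolding s_def by (simp add: power_mult_distrib)
    then show ?thesis by (rule power2_le_imp_le) simp
  qed
  have as: "\<alpha> \<le> s / 39" using alpha_bound[OF assms(3)] unfolding s_def .
  have xb: "\<alpha> * bin n (1/2) m \<le> 1/2" for m
  proof -
    have "\<alpha> * bin n (1/2) m \<le> (s / 39) * Gp"
      by (intro mult_mono as ble) (use s0 assms(2) bin_nonneg in auto)
    also have "\<dots> = Gp * s / 39" by simp
    also have "\<dots> \<le> 1/2" using Gps by simp
    finally show ?thesis .
  qed
  have xnn: "0 \<le> \<alpha> * bin n (1/2) m" for m using assms(2) bin_nonneg by simp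
  define X where "X j r = \<alpha> * bin n (1/2) (r + int (n div 4) + l j)" for j r
  define PI where "PI = PiE {1..k} (\<lambda>_. {1::nat..})"
  define H where "H \<pi> = (\<Prod>j\<in>{1..k}. (1/2::real) ^ (\<pi> j))" for \<pi>
  define F where "F r \<pi> = ee (\<xi> * of_int r) * (\<Prod>j\<in>{1..k}. complex_of_real (X j r) ^ (\<pi> j))" for r \<pi>
  define R where "R = {- int n..int n}"
  have geo: "((\<lambda>p. (1/2::real)^p) has_sum 1) {1..}" using has_sum_geometric_from_1[of "1/2::real"] by simp
  have Hsum: "H summable_on PI" unfolding H_def PI_def
    by (rule prod_summable) (use geo in \<open>auto simp: has_sum_iff\<close>)
  have Hinf: "infsum H PI = 1"
  proof -
    have "infsum H PI = (\<Prod>j\<in>{1..k}. infsum (\<lambda>p. (1/2::real)^p) {1..})"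
      unfolding H_def PI_def
      by (rule infsum_prod_PiE_abs) (use geo in \<open>auto simp: has_sum_iff\<close>)
    also have "\<dots> = 1" using geo by (simp add: has_sum_iff)
    finally show ?thesis .
  qed
  have Hhas: "(H has_sum 1) PI" using Hsum Hinf by (simp add: has_sum_iff)
  have Fle: "norm (F r \<pi>) \<le> H \<pi>" for r \<pi>
  proof -
    have "norm (F r \<pi>) = (\<Prod>j\<in>{1..k}. X j r ^ (\<pi> j))"
      unfolding F_def by (simp add: norm_mult prod_norm[symmetric] norm_power X_def xnn bin_nonneg assms(2) less_imp_le)
    also have "\<dots> \<le> H \<pi>" unfolding H_def
      by (intro prod_mono conjI power_mono zero_le_power) (use xb xnn in \<open>auto simp: X_def\<close>)
    finally show ?thesis .
  qed
  have Fs: "F r summable_on PI" for r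
  proof -
    have "(\<lambda>\<pi>. norm (F r \<pi>)) summable_on PI"
      by (rule summable_on_comparison_test[OF Hsum]) (use Fle in auto)
    then show ?thesis by (rule abs_summable_summable)
  qed
  have summ: "(\<lambda>\<pi>. \<Sum>r\<in>R. F r \<pi>) summable_on PI \<and> (\<Sum>r\<in>R. infsum (F r) PI) = infsum (\<lambda>\<pi>. \<Sum>r\<in>R. F r \<pi>) PI"
    by (rule infsum_finite_sum) (use Fs in \<open>auto simp: R_def\<close>)
  have stepA: "(\<Sum>\<^sub>\<infinity>r::int. exp (\<i> * complex_of_real (\<xi> * of_int r)) *
            complex_of_real (\<Prod>j=1..k.
              \<alpha> * bin n (1/2) (r + int (n div 4) + l j) /
              (1 - \<alpha> * bin n (1/2) (r + int (n div 4) + l j))))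
     = (\<Sum>r\<in>R. ee (\<xi> * of_int r) * complex_of_real (\<Prod>j=1..k. X j r / (1 - X j r)))"
  proof -
    have "(\<Sum>\<^sub>\<infinity>r::int. exp (\<i> * complex_of_real (\<xi> * of_int r)) *
            complex_of_real (\<Prod>j=1..k.
              \<alpha> * bin n (1/2) (r + int (n div 4) + l j) /
              (1 - \<alpha> * bin n (1/2) (r + int (n div 4) + l j))))
       = infsum (\<lambda>r. ee (\<xi> * of_int r) * complex_of_real (\<Prod>j=1..k. X j r / (1 - X j r))) R"
    proof (rule infsum_cong_neutral)
      fix r :: int assume "r \<in> UNIV - R"
      then have r: "r < - int n \<or> r > int n" unfolding R_def by auto
      have "bin n (1/2) (r + int (n div 4) + l 1) = 0"
        using r l1 by (auto simp: bin_half)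
      then have "X 1 r / (1 - X 1 r) = 0" unfolding X_def by simp
      then have P: "(\<Prod>j=1..k. X j r / (1 - X j r)) = 0" using k1 by (intro prod_zero) auto
      have P': "(\<Prod>j=1..k. \<alpha> * bin n (1/2) (r + int (n div 4) + l j) /
              (1 - \<alpha> * bin n (1/2) (r + int (n div 4) + l j))) = 0" using P unfolding X_def .
      show "exp (\<i> * complex_of_real (\<xi> * of_int r)) *
            complex_of_real (\<Prod>j=1..k.
              \<alpha> * bin n (1/2) (r + int (n div 4) + l j) /
              (1 - \<alpha> * bin n (1/2) (r + int (n div 4) + l j))) = 0" by (simp only: P' of_real_0 mult_zero_right)
    qed (auto simp: ee_def X_def)
    then show ?thesis unfolding R_def by simp
  qed
  have stepB: "ee (\<xi> * of_int r) * complex_of_real (\<Prod>j=1..k. X j r / (1 - X j r)) = infsum (F r) PI" for r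
  proof -
    have x0: "0 \<le> X j r" for j unfolding X_def by (rule xnn)
    have x1: "X j r \<le> 1/2" for j unfolding X_def by (rule xb)
    have g: "((\<lambda>p. complex_of_real (X j r) ^ p) has_sum complex_of_real (X j r / (1 - X j r))) {1..}" for j
    proof -
      have "norm (complex_of_real (X j r)) < 1" using x0[of j] x1[of j] by simp
      from has_sum_geometric_from_1[OF this] show ?thesis by simp
    qed
    have gr: "((\<lambda>p. norm (complex_of_real (X j r) ^ p)) has_sum (X j r / (1 - X j r))) {1..}" for j
    proof -
      have "norm (X j r) < 1" using x0[of j] x1[of j] by simp
      from has_sum_geometric_from_1[OF this] show ?thesis
        using x0[of j] by (simp add: norm_power)
    qed
    have "complex_of_real (\<Prod>j=1..k. X j r / (1 - X j r)) = (\<Prod>j\<in>{1..k}. infsum (\<lambda>p. complex_of_real (X j r) ^ p) {1..})"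
      using g by (simp add: has_sum_iff)
    also have "\<dots> = infsum (\<lambda>\<pi>. \<Prod>j\<in>{1..k}. complex_of_real (X j r) ^ (\<pi> j)) PI"
      unfolding PI_def by (rule infsum_prod_PiE_abs[symmetric]) (use gr in \<open>auto simp: has_sum_iff\<close>)
    finally show ?thesis unfolding F_def by (simp add: infsum_cmult_right')
  qed
  have main_eq: "(\<Sum>\<^sub>\<infinity>r::int. exp (\<i> * complex_of_real (\<xi> * of_int r)) *
            complex_of_real (\<Prod>j=1..k.
              \<alpha> * bin n (1/2) (r + int (n div 4) + l j) /
              (1 - \<alpha> * bin n (1/2) (r + int (n div 4) + l j))))
     = infsum (\<lambda>\<pi>. \<Sum>r\<in>R. F r \<pi>) PI"
    unfolding stepA stepB using summ by simp
  have Gb: "norm (\<Sum>r\<in>R. F r \<pi>) \<le> 2 * exp (- s) * H \<pi>" if piP: "\<pi> \<in> PI" for \<pi>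
  proof -
    have pj: "\<pi> j \<ge> 1" if "j \<in> {1..k}" for j using piP that unfolding PI_def by (auto simp: PiE_def Pi_def)
    define T where "T = Sigma {1..k} (\<lambda>j. {..<\<pi> j})"
    define a where "a = (\<lambda>t::nat\<times>nat. int (n div 4) + l (fst t))"
    define t0 where "t0 = (1::nat, 0::nat)"
    define M where "M = (\<Sum>j\<in>{1..k}. \<pi> j)"
    have fT: "finite T" unfolding T_def by simp
    have t0T: "t0 \<in> T" unfolding T_def t0_def using pj[OF k1] k1 by auto
    have cT: "card T = M" unfolding T_def M_def by simp
    have M1: "M \<ge> 1" unfolding M_def using member_le_sum[of 1 "{1..k}" \<pi>] k1 pj[OF k1] by simp
    have HM: "H \<pi> = (1/2) ^ M" unfolding H_def M_def by (simp add: power_sum)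
    have prodeq: "(\<Prod>j\<in>{1..k}. complex_of_real (X j r) ^ (\<pi> j)) = complex_of_real (\<alpha> ^ M) * complex_of_real (\<Prod>t\<in>T. bin n (1/2) (r + a t))" for r
    proof -
      have A: "(\<Prod>t\<in>T. bin n (1/2) (r + a t)) = (\<Prod>j\<in>{1..k}. bin n (1/2) (r + int (n div 4) + l j) ^ \<pi> j)"
      proof -
        have "(\<Prod>t\<in>T. bin n (1/2) (r + a t)) = (\<Prod>j\<in>{1..k}. \<Prod>i\<in>{..<\<pi> j}. bin n (1/2) (r + int (n div 4) + l j))"
          unfolding T_def a_def by (subst prod.Sigma) (auto simp: add.assoc case_prod_unfold)
        also have "\<dots> = (\<Prod>j\<in>{1..k}. bin n (1/2) (r + int (n div 4) + l j) ^ \<pi> j)" by simp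
        finally show ?thesis .
      qed
      have "(\<Prod>j\<in>{1..k}. X j r ^ \<pi> j) = (\<Prod>j\<in>{1..k}. \<alpha> ^ \<pi> j * bin n (1/2) (r + int (n div 4) + l j) ^ \<pi> j)"
        unfolding X_def by (simp add: power_mult_distrib)
      also have "\<dots> = \<alpha> ^ M * (\<Prod>t\<in>T. bin n (1/2) (r + a t))"
        unfolding A M_def by (simp add: prod.distrib power_sum)
      finally have "(\<Prod>j\<in>{1..k}. X j r ^ \<pi> j) = \<alpha> ^ M * (\<Prod>t\<in>T. bin n (1/2) (r + a t))" .
      then have "complex_of_real (\<Prod>j\<in>{1..k}. X j r ^ \<pi> j) = complex_of_real (\<alpha> ^ M) * complex_of_real (\<Prod>t\<in>T. bin n (1/2) (r + a t))"
        by simp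
      then show ?thesis by (simp add: of_real_prod)
    qed
    have at0: "a t0 = int (n div 4) + l 1" unfolding a_def t0_def by simp
    have sumeq: "(\<Sum>r\<in>R. F r \<pi>) = complex_of_real (\<alpha> ^ M) *
       (\<Sum>r\<in>{- a t0..int n - a t0}. ee (\<xi> * of_int r) * complex_of_real (\<Prod>t\<in>T. bin n (1/2) (r + a t)))"
    proof -
      have "(\<Sum>r\<in>R. F r \<pi>) = complex_of_real (\<alpha> ^ M) * (\<Sum>r\<in>R. ee (\<xi> * of_int r) * complex_of_real (\<Prod>t\<in>T. bin n (1/2) (r + a t)))"
        unfolding F_def prodeq sum_distrib_left by (intro sum.cong refl) (simp add: mult_ac)
      also have "(\<Sum>r\<in>R. ee (\<xi> * of_int r) * complex_of_real (\<Prod>t\<in>T. bin n (1/2) (r + a t)))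
          = (\<Sum>r\<in>{- a t0..int n - a t0}. ee (\<xi> * of_int r) * complex_of_real (\<Prod>t\<in>T. bin n (1/2) (r + a t)))"
      proof (rule sum.mono_neutral_right)
        show "finite R" unfolding R_def by simp
        show "{- a t0..int n - a t0} \<subseteq> R" unfolding R_def at0 using l1 by auto
        show "\<forall>r\<in>R - {- a t0..int n - a t0}. ee (\<xi> * of_int r) * complex_of_real (\<Prod>t\<in>T. bin n (1/2) (r + a t)) = 0"
        proof
          fix r assume "r \<in> R - {- a t0..int n - a t0}"
          then have "bin n (1/2) (r + a t0) = 0" by (auto simp: bin_half)
          then have "(\<Prod>t\<in>T. bin n (1/2) (r + a t)) = 0" using fT t0T by (intro prod_zero) auto
          then show "ee (\<xi> * of_int r) * complex_of_real (\<Prod>t\<in>T. bin n (1/2) (r + a t)) = 0" by simp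
        qed
      qed
      finally show ?thesis .
    qed
    have D: "\<bar>a t - a t0\<bar> + int n < int N" if "t \<in> T" for t
    proof -
      have j: "fst t \<in> {1..k}" using that unfolding T_def by auto
      have "1 \<le> l (fst t)" "l (fst t) \<le> int (n div 2)" using assms(6)[OF j] by auto
      then have "\<bar>l (fst t) - l 1\<bar> \<le> int n" using l1 by linarith
      then show ?thesis unfolding a_def t0_def N_def by simp
    qed
    have m: "2 * p \<le> n" unfolding p_def by linarith
    have cb: "norm (\<Sum>r\<in>{- a t0..int n - a t0}. ee (\<xi> * of_int r) * complex_of_real (\<Prod>t\<in>T. bin n (1/2) (r + a t)))
      \<le> exp (- gam * real (n - 2 * p) / real (card T)) * ((\<Sum>j<N. \<bar>cos (th N j / 2)\<bar> ^ (2 * p)) / real N) ^ (card T - 1)"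
      by (rule conv_bound[of T t0 a n N \<xi> "2 * p", OF fT t0T D xi m])
    have ratio: "(\<Sum>j<N. \<bar>cos (th N j / 2)\<bar> ^ (2 * p)) / real N = \<Gamma>"
    proof -
      have "p < N" unfolding p_def N_def by linarith
      from gamma_exact[OF this] show ?thesis unfolding th_def \<Gamma>_def N_def by simp
    qed
    have num: "\<alpha> ^ M * exp (- gam * real (n - 2*p) / real M) * \<Gamma> ^ (M - 1) \<le> 2 * (1/2) ^ M * exp (- sqrt n)"
      by (rule numeric[OF n3 assms(2) assms(3)]) (use M1 central_bound[of p] in \<open>auto simp: \<Gamma>_def p_def\<close>)
    have "norm (\<Sum>r\<in>R. F r \<pi>) = \<alpha> ^ M * norm (\<Sum>r\<in>{- a t0..int n - a t0}. ee (\<xi> * of_int r) * complex_of_real (\<Prod>t\<in>T. bin n (1/2) (r + a t)))"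
      unfolding sumeq norm_mult using assms(2) by (simp add: norm_power)
    also have "\<dots> \<le> \<alpha> ^ M * (exp (- gam * real (n - 2 * p) / real M) * \<Gamma> ^ (M - 1))"
      using cb unfolding ratio cT using assms(2) by (intro mult_left_mono) auto
    also have "\<dots> \<le> 2 * (1/2) ^ M * exp (- sqrt n)" using num by (simp add: mult_ac)
    also have "\<dots> = 2 * exp (- s) * H \<pi>" unfolding HM s_def by simp
    finally show ?thesis .
  qed
  have "norm (infsum (\<lambda>\<pi>. \<Sum>r\<in>R. F r \<pi>) PI) \<le> 2 * exp (- s) * 1"
  proof (rule norm_infsum_le)
    show "((\<lambda>\<pi>. \<Sum>r\<in>R. F r \<pi>) has_sum infsum (\<lambda>\<pi>. \<Sum>r\<in>R. F r \<pi>) PI) PI"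
      using summ by (simp add: has_sum_iff)
    show "((\<lambda>\<pi>. 2 * exp (- s) * H \<pi>) has_sum (2 * exp (- s) * 1)) PI"
      by (rule has_sum_cmult_right[OF Hhas])
  qed (use Gb in auto)
  then show ?thesis unfolding main_eq s_def by simp
qed


end
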